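(* Let $k\ge2$ be an integer and $n\in\mathbb Z$, and suppose that $H=(L_k^{(0)})^2$ is invertible (over $\mathbb Q$). Then $L_k^{(n)}$ is invertible and its inverse is $L_k^{(-n)}H^{-1}$.
   Context: Fix an integer $k\ge2$. Let $Q_k$ be the $k\times k$ matrix whose first row is all ones, with $(Q_k)_{i+1,i}=1$ for $1\le i\le k-1$ and all other entries $0$, and for $r\in\mathbb Z$ let $Q_k^r$ denote its $r$-th power. The generalized Lucas sequence of order $k$, $(l_{k,n})_{n\in\mathbb Z}$, is the two-sided sequence satisfying $l_{k,n+k}=l_{k,n+k-1}+\dots+l_{k,n}$ for all $n\in\mathbb Z$ with initial values $l_{k,r}=\operatorname{trace}(Q_k^r)$ for $0\le r\le k-1$ (so $l_{k,0}=k$ and $l_{k,r}=2^r-1$ for $1\le r\le k-1$). For $n\in\mathbb Z$ the generalized Lucas matrix $L_k^{(n)}$ is the $k\times k$ matrix with entries $(L_k^{(n)})_{i,1}=l_{k,k+n-i}$ and $(L_k^{(n)})_{i,j}=\sum_{m=n-i+j-1}^{k+n-i-1} l_{k,m}$ for $2\le j\le k$, $1\le i\le k$. *)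

theory Defs
  imports "Jordan_Normal_Form.Matrix"
begin

definition mtrace :: "'a::comm_ring_1 mat \<Rightarrow> 'a" where
  "mtrace A = (\<Sum>i<dim_row A. A $$ (i, i))"

definition Qk :: "nat \<Rightarrow> rat mat" where
  "Qk k = mat k k (\<lambda>(i, j). if i = 0 then 1 else if i = j + 1 then 1 else 0)"

definition lucas :: "nat \<Rightarrow> int \<Rightarrow> rat" where
  "lucas k = (THE f. (\<forall>n::int. f (n + int k) = (\<Sum>i<k. f (n + int i))) \<and>
                     (\<forall>r<k. f (int r) = mtrace (Qk k ^\<^sub>m r)))"

(* generalized Lucas matrix L_k^(n); paper's 1-based (i,j) is (i+1,j+1) here *)
definition lucas_mat :: "nat \<Rightarrow> int \<Rightarrow> rat mat" where
  "lucas_mat k n = mat k k (\<lambda>(i, j).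
     let i' = int i + 1; j' = int j + 1 in
     if j' = 1 then lucas k (int k + n - i')
     else (\<Sum>m\<in>{n - i' + j' - 1 .. int k + n - i' - 1}. lucas k m))"

end

theory Submission
  imports Defs "Jordan_Normal_Form.Determinant"
begin

function lseqF :: "nat \<Rightarrow> (nat \<Rightarrow> rat) \<Rightarrow> nat \<Rightarrow> rat" where
  "lseqF k c m = (if m < k then c m else (\<Sum>i<k. lseqF k c (m - k + i)))"
  by auto
termination by (relation "measure (\<lambda>(k,c,m). m)") auto

function lseqG :: "nat \<Rightarrow> (nat \<Rightarrow> rat) \<Rightarrow> nat \<Rightarrow> rat" where
  "lseqG k c m = (if m < k \<or> k = 0 then c (k - 1 - m)
     else lseqG k c (m - k) - (\<Sum>i\<in>{1..<k}. lseqG k c (m - i)))"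
  by auto
termination by (relation "measure (\<lambda>(k,c,m). m)") auto

declare lseqF.simps[simp del] lseqG.simps[simp del]

lemma rec_exists:
  assumes k: "k \<ge> 1"
  shows "\<exists>f::int\<Rightarrow>rat. (\<forall>n::int. f (n + int k) = (\<Sum>i<k. f (n + int i))) \<and> (\<forall>r<k. f (int r) = c r)"
proof -
  define f where "f x = (if x \<ge> 0 then lseqF k c (nat x) else lseqG k c (nat (int k - 1 - x)))" for x
  have A: "f x = lseqF k c (nat x)" if "x \<ge> 0" for x using that f_def by simp
  have B: "f x = lseqG k c (nat (int k - 1 - x))" if "x \<le> int k - 1" for x
  proof (cases "x \<ge> 0")
    case True
    then have "nat x < k" using that by linarith
    then have "lseqF k c (nat x) = c (nat x)" by (simp add: lseqF.simps)
    moreover have "lseqG k c (nat (int k - 1 - x)) = c (nat x)"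
      using True that \<open>nat x < k\<close> by (subst lseqG.simps) (auto intro!: arg_cong[where f=c])
    ultimately show ?thesis using A True by simp
  qed (simp add: f_def)
  have R: "f (n + int k) = (\<Sum>i<k. f (n + int i))" for n
  proof (cases "n \<ge> 0")
    case True
    have "f (n + int k) = lseqF k c (nat n + k)" using True A by (simp add: nat_add_distrib)
    also have "\<dots> = (\<Sum>i<k. lseqF k c (nat n + i))" using k by (subst lseqF.simps) simp
    also have "\<dots> = (\<Sum>i<k. f (n + int i))" using True A by (simp add: nat_add_distrib)
    finally show ?thesis .
  next
    case False
    define m where "m = nat (int k - 1 - n)"
    have mk: "m \<ge> k" using False m_def by linarith
    have "f n = lseqG k c m" using B False m_def by simp
    also have "\<dots> = lseqG k c (m - k) - (\<Sum>i\<in>{1..<k}. lseqG k c (m - i))"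
      using mk k by (subst lseqG.simps) simp
    also have "m - k = nat (int k - 1 - (n + int k))" using m_def mk False by linarith
    also have "lseqG k c (nat (int k - 1 - (n + int k))) = f (n + int k)"
      using B[of "n + int k"] False by simp
    also have "(\<Sum>i\<in>{1..<k}. lseqG k c (m - i)) = (\<Sum>i\<in>{1..<k}. f (n + int i))"
    proof (rule sum.cong)
      fix i assume "i \<in> {1..<k}"
      then have "m - i = nat (int k - 1 - (n + int i))" using m_def by auto
      moreover have "f (n + int i) = lseqG k c (nat (int k - 1 - (n + int i)))"
        using B[of "n + int i"] False \<open>i \<in> {1..<k}\<close> by simp
      ultimately show "lseqG k c (m - i) = f (n + int i)" by simp
    qed simp
    finally have "f n = f (n + int k) - (\<Sum>i\<in>{1..<k}. f (n + int i))" .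
    moreover have "(\<Sum>i<k. f (n + int i)) = f n + (\<Sum>i\<in>{1..<k}. f (n + int i))"
      using k by (simp add: lessThan_atLeast0 sum.atLeast_Suc_lessThan)
    ultimately show ?thesis by simp
  qed
  have I: "f (int r) = c r" if "r < k" for r
    using A[of "int r"] that by (simp add: lseqF.simps)
  show ?thesis using R I by blast
qed

lemma rec_unique:
  assumes k: "k \<ge> 1"
    and f: "\<forall>n::int. f (n + int k) = (\<Sum>i<k. f (n + int i))" "\<forall>r<k. f (int r) = (c r :: rat)"
    and g: "\<forall>n::int. g (n + int k) = (\<Sum>i<k. g (n + int i))" "\<forall>r<k. g (int r) = c r"
  shows "f = g"
proof -
  define d where "d x = f x - g x" for x
  have dr: "d (n + int k) = (\<Sum>i<k. d (n + int i))" for n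
    using f g by (simp add: d_def sum_subtractf)
  have d0: "d (int r) = 0" if "r < k" for r using f g that by (simp add: d_def)
  have pos: "d (int m) = 0" for m
  proof (induction m rule: less_induct)
    case (less m)
    show ?case
    proof (cases "m < k")
      case True then show ?thesis by (rule d0)
    next
      case False
      have "d (int m) = d (int (m - k) + int k)" using False by simp
      also have "\<dots> = (\<Sum>i<k. d (int (m - k) + int i))" by (rule dr)
      also have "\<dots> = 0"
      proof (rule sum.neutral, rule ballI)
        fix i assume "i \<in> {..<k}"
        have e: "int (m - k) + int i = int (m - k + i)" by simp
        have "m - k + i < m" using False k \<open>i \<in> {..<k}\<close> by auto
        then have "d (int (m - k + i)) = 0" using less by blast
        then show "d (int (m - k) + int i) = 0" unfolding e .
      qed
      finally show ?thesis .
    qed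
  qed
  have neg: "d (- int m) = 0" for m
  proof (induction m rule: less_induct)
    case (less m)
    have hi: "d (- int m + int i) = 0" if "1 \<le> i" for i
    proof (cases "int i \<ge> int m")
      case True then show ?thesis using pos[of "i - m"] by (simp add: of_nat_diff)
    next
      case False
      have e: "- int m + int i = - int (m - i)" using False by auto
      have "m - i < m" using False that by auto
      then have "d (- int (m - i)) = 0" using less by blast
      then show ?thesis unfolding e .
    qed
    have "d (- int m + int k) = d (- int m) + (\<Sum>i\<in>{1..<k}. d (- int m + int i))"
      using dr[of "- int m"] k by (simp add: lessThan_atLeast0 sum.atLeast_Suc_lessThan)
    moreover have "d (- int m + int k) = 0" using hi k by simp
    moreover have "(\<Sum>i\<in>{1..<k}. d (- int m + int i)) = 0" using hi by simp
    ultimately show ?case by simp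
  qed
  have "d x = 0" for x
  proof (cases "x \<ge> 0")
    case True then show ?thesis using pos[of "nat x"] by simp
  next
    case False then show ?thesis using neg[of "nat (- x)"] by simp
  qed
  then show ?thesis by (auto simp: d_def)
qed

lemma lucas_rec:
  assumes "k \<ge> 1"
  shows "lucas k (n + int k) = (\<Sum>i<k. lucas k (n + int i))"
proof -
  let ?P = "\<lambda>f. (\<forall>n::int. f (n + int k) = (\<Sum>i<k. f (n + int i))) \<and>
                     (\<forall>r<k. f (int r) = mtrace (Qk k ^\<^sub>m r))"
  obtain f where f: "?P f"
    using rec_exists[OF assms, of "\<lambda>r. mtrace (Qk k ^\<^sub>m r)"] by blast
  have "\<exists>!f. ?P f"
  proof (rule ex1I[of _ f])
    show "?P f" by (rule f)
  next
    fix g assume g: "?P g"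
    show "g = f"
      using rec_unique[OF assms, of g "\<lambda>r. mtrace (Qk k ^\<^sub>m r)" f] f g by blast
  qed
  then have "?P (lucas k)" unfolding lucas_def by (rule theI')
  then have "\<forall>n::int. lucas k (n + int k) = (\<Sum>i<k. lucas k (n + int i))" by (rule conjunct1)
  then show ?thesis by (rule spec)
qed

lemma int_interval_sum:
  "sum g {a..b::int} = (\<Sum>d<nat (b - a + 1). g (a + int d))"
proof -
  have "{a..b} = (\<lambda>d::nat. a + int d) ` {..<nat (b - a + 1)}"
  proof (intro equalityI subsetI)
    fix x assume "x \<in> {a..b}"
    then have "x = a + int (nat (x - a))" "nat (x - a) < nat (b - a + 1)" by auto
    then show "x \<in> (\<lambda>d. a + int d) ` {..<nat (b - a + 1)}" by blast
  qed auto
  moreover have "inj_on (\<lambda>d. a + int d) {..<nat (b - a + 1)}" by (auto simp: inj_on_def)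
  ultimately show ?thesis by (simp add: sum.reindex)
qed

definition cc :: "nat \<Rightarrow> nat \<Rightarrow> int \<Rightarrow> rat" where
  "cc k j t = (if j = 0 then lucas k (int k + t - 1) else (\<Sum>d<k-j. lucas k (t + int j - 1 + int d)))"

lemma Lent:
  assumes "i < k" "j < k"
  shows "lucas_mat k n $$ (i,j) = cc k j (n - int i)"
proof (cases "j = 0")
  case True then show ?thesis using assms by (simp add: lucas_mat_def cc_def algebra_simps)
next
  case False
  have "lucas_mat k n $$ (i,j) = (\<Sum>m\<in>{n - int i + int j - 1 .. int k + n - int i - 2}. lucas k m)"
    using assms False by (simp add: lucas_mat_def Let_def algebra_simps)
  also have "\<dots> = (\<Sum>d<k-j. lucas k (n - int i + int j - 1 + int d))"
    using assms by (subst int_interval_sum) (auto intro!: sum.cong arg_cong[where f="\<lambda>N. {..<N}"])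
  finally show ?thesis using False by (simp add: cc_def algebra_simps)
qed

lemma cc_rec:
  assumes k: "k \<ge> 1"
  shows "cc k j (x + int k) = (\<Sum>t<k. cc k j (x + int t))"
proof (cases "j = 0")
  case True
  have "lucas k (x + int k - 1 + int k) = (\<Sum>t<k. lucas k (x + int k - 1 + int t))"
    by (rule lucas_rec[OF k])
  then show ?thesis using True by (simp add: cc_def algebra_simps)
next
  case False
  have "cc k j (x + int k) = (\<Sum>d<k-j. lucas k ((x + int j - 1 + int d) + int k))"
    using False by (simp add: cc_def algebra_simps)
  also have "\<dots> = (\<Sum>d<k-j. \<Sum>t<k. lucas k ((x + int j - 1 + int d) + int t))"
    by (simp add: lucas_rec[OF k])
  also have "\<dots> = (\<Sum>t<k. \<Sum>d<k-j. lucas k ((x + int j - 1 + int d) + int t))"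
    by (rule sum.swap)
  also have "\<dots> = (\<Sum>t<k. cc k j (x + int t))"
    using False by (simp add: cc_def algebra_simps)
  finally show ?thesis .
qed

lemma cc_shift:
  assumes k: "k \<ge> 2" and j: "j < k"
  shows "cc k j (t + 1) = cc k 0 t + (if j + 1 < k then cc k (j + 1) t else 0)"
proof (cases "j = 0")
  case True
  have "lucas k ((t - 1 + 1) + int k) = (\<Sum>i<k. lucas k (t + int i))"
    using lucas_rec[of k "t"] k by simp
  also have "\<dots> = (\<Sum>i<k-1. lucas k (t + int i)) + lucas k (t + int (k - 1))"
  proof -
    obtain k' where "k = Suc k'" using k by (cases k) auto
    then show ?thesis by simp
  qed
  finally show ?thesis using True k by (simp add: cc_def algebra_simps of_nat_diff)
next
  case False
  have e: "k - j = Suc (k - (j+1))" using j by simp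
  have "cc k j (t + 1) = (\<Sum>d<Suc (k - (j+1)). lucas k (t + int j + int d))"
    using False e by (simp add: cc_def algebra_simps)
  also have "\<dots> = (\<Sum>d<k - (j+1). lucas k (t + int j + int d)) + lucas k (t + int j + int (k - (j+1)))"
    by simp
  also have "lucas k (t + int j + int (k - (j+1))) = cc k 0 t"
    using j by (simp add: cc_def of_nat_diff algebra_simps)
  also have "(\<Sum>d<k - (j+1). lucas k (t + int j + int d)) = (if j + 1 < k then cc k (j + 1) t else 0)"
    by (auto simp: cc_def algebra_simps)
  finally show ?thesis by simp
qed

lemma dims: "lucas_mat k n \<in> carrier_mat k k" "Qk k \<in> carrier_mat k k"
  by (auto simp: lucas_mat_def Qk_def)

lemma dims2[simp]: "dim_row (lucas_mat k n) = k" "dim_col (lucas_mat k n) = k"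
   "dim_row (Qk k) = k" "dim_col (Qk k) = k"
  by (auto simp: lucas_mat_def Qk_def)

lemma LQ:
  assumes k: "k \<ge> 2"
  shows "lucas_mat k (n + 1) = lucas_mat k n * Qk k"
proof (rule eq_matI)
  fix i j assume ij: "i < dim_row (lucas_mat k n * Qk k)" "j < dim_col (lucas_mat k n * Qk k)"
  then have i: "i < k" and j: "j < k" by (auto simp: lucas_mat_def Qk_def)
  have "(lucas_mat k n * Qk k) $$ (i,j) = (\<Sum>r<k. lucas_mat k n $$ (i,r) * Qk k $$ (r,j))"
    using i j by (auto simp: scalar_prod_def lessThan_atLeast0 intro!: sum.cong)
  also have "\<dots> = (\<Sum>r<k. (if r = 0 then lucas_mat k n $$ (i,0) else 0) +
        (if r = j + 1 then lucas_mat k n $$ (i,r) else 0))"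
    using j by (intro sum.cong) (auto simp: Qk_def)
  also have "\<dots> = lucas_mat k n $$ (i,0) + (if j + 1 < k then lucas_mat k n $$ (i,j+1) else 0)"
    using k by (simp add: sum.distrib)
  also have "\<dots> = cc k j (n - int i + 1)"
    using cc_shift[OF k j, of "n - int i"] i j k by (simp add: Lent)
  also have "\<dots> = lucas_mat k (n + 1) $$ (i,j)" using i j by (simp add: Lent algebra_simps)
  finally show "lucas_mat k (n + 1) $$ (i,j) = (lucas_mat k n * Qk k) $$ (i,j)" by simp
qed (use dims in auto)

lemma QL:
  assumes k: "k \<ge> 2"
  shows "lucas_mat k (n + 1) = Qk k * lucas_mat k n"
proof (rule eq_matI)
  fix i j assume ij: "i < dim_row (Qk k * lucas_mat k n)" "j < dim_col (Qk k * lucas_mat k n)"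
  then have i: "i < k" and j: "j < k" by (auto simp: lucas_mat_def Qk_def)
  have "(Qk k * lucas_mat k n) $$ (i,j) = (\<Sum>r<k. Qk k $$ (i,r) * lucas_mat k n $$ (r,j))"
    using i j by (auto simp: scalar_prod_def lessThan_atLeast0 intro!: sum.cong)
  also have "\<dots> = lucas_mat k (n + 1) $$ (i,j)"
  proof (cases "i = 0")
    case True
    have "(\<Sum>r<k. Qk k $$ (i,r) * lucas_mat k n $$ (r,j)) = (\<Sum>r<k. cc k j (n - int r))"
      using True j by (intro sum.cong) (auto simp: Qk_def Lent)
    also have "\<dots> = (\<Sum>t<k. cc k j (n - int (k - Suc t)))"
      by (rule sum.nat_diff_reindex[symmetric])
    also have "\<dots> = (\<Sum>t<k. cc k j ((n + 1 - int k) + int t))"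
      by (intro sum.cong refl arg_cong[where f="cc k j"]) (auto simp: of_nat_diff)
    also have "\<dots> = cc k j ((n + 1 - int k) + int k)"
      using k by (intro cc_rec[symmetric]) simp
    finally show ?thesis using True i j by (simp add: Lent)
  next
    case False
    have "(\<Sum>r<k. Qk k $$ (i,r) * lucas_mat k n $$ (r,j)) =
          (\<Sum>r<k. if r = i - 1 then lucas_mat k n $$ (r,j) else 0)"
      using False i j by (intro sum.cong) (auto simp: Qk_def)
    also have "\<dots> = lucas_mat k n $$ (i - 1, j)" using i by simp
    finally show ?thesis using False i j by (simp add: Lent of_nat_diff algebra_simps)
  qed
  finally show "lucas_mat k (n + 1) $$ (i,j) = (Qk k * lucas_mat k n) $$ (i,j)" by simp
qed (use dims in auto)

lemma prod_const:
  assumes k: "k \<ge> 2"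
  shows "lucas_mat k a * lucas_mat k (c - a) = lucas_mat k 0 * lucas_mat k c"
proof (induction a rule: int_induct[where k=0])
  case base then show ?case by simp
next
  case (step1 i)
  have IH: "lucas_mat k i * lucas_mat k (c - i) = lucas_mat k 0 * lucas_mat k c"
    using step1 by blast
  have e1: "c - i = (c - (i + 1)) + 1" by simp
  have "lucas_mat k (i + 1) * lucas_mat k (c - (i + 1)) =
        (lucas_mat k i * Qk k) * lucas_mat k (c - (i + 1))" by (simp only: LQ[OF k])
  also have "\<dots> = lucas_mat k i * (Qk k * lucas_mat k (c - (i + 1)))"
    using dims by (meson assoc_mult_mat)
  also have "Qk k * lucas_mat k (c - (i + 1)) = lucas_mat k (c - i)"
    unfolding e1 by (rule QL[OF k, symmetric])
  also note IH
  finally show ?case .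
next
  case (step2 i)
  have IH: "lucas_mat k i * lucas_mat k (c - i) = lucas_mat k 0 * lucas_mat k c"
    using step2 by blast
  have e1: "c - (i - 1) = (c - i) + 1" by simp
  have e2: "i = (i - 1) + 1" by simp
  have "lucas_mat k (i - 1) * lucas_mat k (c - (i - 1)) =
        lucas_mat k (i - 1) * (Qk k * lucas_mat k (c - i))"
    unfolding e1 by (simp only: QL[OF k])
  also have "\<dots> = (lucas_mat k (i - 1) * Qk k) * lucas_mat k (c - i)"
    using dims by (metis assoc_mult_mat)
  also have "lucas_mat k (i - 1) * Qk k = lucas_mat k i"
    by (subst (2) e2) (rule LQ[OF k, symmetric])
  also note IH
  finally show ?case .
qed

theorem theorem7:
  fixes k :: nat and n :: int
  assumes "k \<ge> 2"
    and "invertible_mat (lucas_mat k 0 * lucas_mat k 0)"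
  shows "invertible_mat (lucas_mat k n) \<and>
    (\<forall>Hi \<in> carrier_mat k k.
       inverts_mat (lucas_mat k 0 * lucas_mat k 0) Hi \<and> inverts_mat Hi (lucas_mat k 0 * lucas_mat k 0)
       \<longrightarrow> inverts_mat (lucas_mat k n) (lucas_mat k (- n) * Hi) \<and>
           inverts_mat (lucas_mat k (- n) * Hi) (lucas_mat k n))"
proof -
  let ?H = "lucas_mat k 0 * lucas_mat k 0"
  have P: "lucas_mat k n * lucas_mat k (- n) = ?H"
    using prod_const[OF assms(1), of n 0] by simp
  have main: "inverts_mat (lucas_mat k n) (lucas_mat k (- n) * Hi) \<and>
           inverts_mat (lucas_mat k (- n) * Hi) (lucas_mat k n)"
    if Hi: "Hi \<in> carrier_mat k k" and inv: "inverts_mat ?H Hi" for Hi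
  proof -
    have "?H * Hi = 1\<^sub>m k" using inv by (simp add: inverts_mat_def)
    have 1: "lucas_mat k n * (lucas_mat k (- n) * Hi) = 1\<^sub>m k"
      using dims Hi P \<open>?H * Hi = 1\<^sub>m k\<close> by (metis assoc_mult_mat)
    have X: "lucas_mat k (- n) * Hi \<in> carrier_mat k k" using dims Hi by auto
    have 2: "(lucas_mat k (- n) * Hi) * lucas_mat k n = 1\<^sub>m k"
      by (rule mat_mult_left_right_inverse[OF dims(1) X 1])
    show ?thesis using 1 2 X by (simp add: inverts_mat_def)
  qed
  obtain B where B: "inverts_mat ?H B" "inverts_mat B ?H"
    using assms(2) by (auto simp: invertible_mat_def)
  have "dim_col B = k" using B(1) unfolding inverts_mat_def
    by (metis dims2(1) index_mult_mat(2,3) index_one_mat(3) times_mat_def)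
  moreover have "dim_row B = k" using B(2) unfolding inverts_mat_def
    by (metis dims2(2) index_mult_mat(3) index_one_mat(3))
  ultimately have Bc: "B \<in> carrier_mat k k" by auto
  have "invertible_mat (lucas_mat k n)"
    using main[OF Bc B(1)] by (auto simp: invertible_mat_def square_mat.simps)
  then show ?thesis using main by blast
qed

end
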